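(* Let $A$ be a finite-dimensional semisimple Hopf algebra over $k$, let $\tau$ be a Hopf automorphism of $A$ of finite order $n$, let $G=\langle\tau\rangle$ and $K=A\natural k^G$. Given an $A$-module $N$, make it a $K$-module $M$ by letting $a\natural p_x$ act as $a$ if $x=\tau^{-1}$ and as $0$ otherwise (so $M_{\tau^{-1}}=N$ and $M_x=0$ for $x\neq\tau^{-1}$). Then for every positive multiple $m$ of $n$, $$\nu^A_{m,\tau}(N)=\nu^K_m(M).$$
   Context: $k$ is algebraically closed of characteristic $0$. $k^G$ has basis $\{p_x\}_{x\in G}$ with $p_xp_y=\delta_{x,y}p_x$. The smash coproduct $K=A\natural k^G$ is $A\otimes k^G$ (elements written $a\natural p_x$) with tensor product algebra structure, comultiplication $\Delta(a\natural p_x)=\sum_{y\in G}(a_1\natural p_y)\otimes((y^{-1}\cdot a_2)\natural p_{y^{-1}x})$, counit $\varepsilon(a\natural p_x)=\delta_{1,x}\varepsilon(a)$, antipode $S(a\natural p_x)=(x^{-1}\cdot S(a))\natural p_{x^{-1}}$. $\Lambda_A$ is the normalized integral of $A$ and $\Lambda_K=\Lambda_A\natural p_1$. For a $K$-module $M$, $M_x=p_x\cdot M$. Hopf powers: $h^{[m]}=\sum h_1\cdots h_m$ and $h^{[m,\sigma]}=\sum h_1(\sigma\cdot h_2)\cdots(\sigma^{m-1}\cdot h_m)$ for a Hopf automorphism $\sigma$. Indicators: $\nu^K_m(V)=\chi_V(\Lambda_K^{[m]})$ for a $K$-module $V$ with character $\chi_V$; $\nu^A_{m,\sigma}(W)=\chi_W(\Lambda_A^{[m,\sigma]})$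 for an $A$-module $W$ and Hopf automorphism $\sigma$ whose order divides $m$. *)

theory Defs
  imports "Jordan_Normal_Form.Matrix" "HOL-Computational_Algebra.Polynomial"
begin

(* A finite-dimensional Hopf algebra over a field 'k, given by structure constants
   with respect to a finite basis indexed by the set "basis H".
   Elements are coefficient functions 'b => 'k (zero outside the basis).
     e_i e_j     = sum_l mu i j l e_l
     1           = sum_l eta l e_l
     Delta(e_i)  = sum_{j,l} delta i j l e_j (x) e_l
     eps(e_i)    = eps i
     S(e_i)      = sum_j ant i j e_j                                         *)
record ('b, 'k) hopf_sc =
  basis :: "'b set"
  mu    :: "'b \<Rightarrow> 'b \<Rightarrow> 'b \<Rightarrow> 'k"
  eta   :: "'b \<Rightarrow> 'k"
  delta :: "'b \<Rightarrow> 'b \<Rightarrow> 'b \<Rightarrow> 'k"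
  eps   :: "'b \<Rightarrow> 'k"
  ant   :: "'b \<Rightarrow> 'b \<Rightarrow> 'k"

definition is_hopf_algebra :: "('b, 'k::field) hopf_sc \<Rightarrow> bool" where
  "is_hopf_algebra H \<longleftrightarrow> (let B = basis H in
     finite B \<and>
     (\<forall>i\<in>B. \<forall>j\<in>B. \<forall>k\<in>B. \<forall>r\<in>B.
        (\<Sum>l\<in>B. mu H i j l * mu H l k r) = (\<Sum>l\<in>B. mu H j k l * mu H i l r)) \<and>
     (\<forall>j\<in>B. \<forall>l\<in>B. (\<Sum>i\<in>B. eta H i * mu H i j l) = (if j = l then 1 else 0)
                     \<and> (\<Sum>i\<in>B. eta H i * mu H j i l) = (if j = l then 1 else 0)) \<and>
     (\<forall>i\<in>B. \<forall>a\<in>B. \<forall>b\<in>B. \<forall>c\<in>B.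
        (\<Sum>j\<in>B. delta H i j c * delta H j a b) = (\<Sum>l\<in>B. delta H i a l * delta H l b c)) \<and>
     (\<forall>i\<in>B. \<forall>l\<in>B. (\<Sum>j\<in>B. eps H j * delta H i j l) = (if i = l then 1 else 0)
                     \<and> (\<Sum>j\<in>B. eps H j * delta H i l j) = (if i = l then 1 else 0)) \<and>
     (\<forall>i\<in>B. \<forall>j\<in>B. \<forall>a\<in>B. \<forall>b\<in>B.
        (\<Sum>l\<in>B. mu H i j l * delta H l a b) =
        (\<Sum>p\<in>B. \<Sum>q\<in>B. \<Sum>r\<in>B. \<Sum>s\<in>B.
            delta H i p q * delta H j r s * mu H p r a * mu H q s b)) \<and>
     (\<forall>a\<in>B. \<forall>b\<in>B. (\<Sum>i\<in>B. eta H i * delta H i a b) = eta H a * eta H b) \<and>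
     (\<forall>i\<in>B. \<forall>j\<in>B. (\<Sum>l\<in>B. mu H i j l * eps H l) = eps H i * eps H j) \<and>
     (\<Sum>i\<in>B. eta H i * eps H i) = 1 \<and>
     (\<forall>i\<in>B. \<forall>r\<in>B.
        (\<Sum>j\<in>B. \<Sum>l\<in>B. \<Sum>p\<in>B. delta H i j l * ant H j p * mu H p l r) = eps H i * eta H r
      \<and> (\<Sum>j\<in>B. \<Sum>l\<in>B. \<Sum>p\<in>B. delta H i j l * ant H l p * mu H j p r) = eps H i * eta H r))"

definition hvec :: "('b, 'k::zero) hopf_sc \<Rightarrow> ('b \<Rightarrow> 'k) \<Rightarrow> bool" where
  "hvec H v \<longleftrightarrow> (\<forall>b. b \<notin> basis H \<longrightarrow> v b = 0)"

definition bvec :: "('b, 'k::{zero,one}) hopf_sc \<Rightarrow> 'b \<Rightarrow> ('b \<Rightarrow> 'k)" where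
  "bvec H i = (\<lambda>b. if b = i \<and> b \<in> basis H then 1 else 0)"

definition hmult :: "('b, 'k::comm_ring_1) hopf_sc \<Rightarrow> ('b \<Rightarrow> 'k) \<Rightarrow> ('b \<Rightarrow> 'k) \<Rightarrow> ('b \<Rightarrow> 'k)" where
  "hmult H x y = (\<lambda>l. if l \<in> basis H then
      (\<Sum>i\<in>basis H. \<Sum>j\<in>basis H. x i * y j * mu H i j l) else 0)"

definition hone :: "('b, 'k::comm_ring_1) hopf_sc \<Rightarrow> ('b \<Rightarrow> 'k)" where
  "hone H = (\<lambda>l. if l \<in> basis H then eta H l else 0)"

definition hcounit :: "('b, 'k::comm_ring_1) hopf_sc \<Rightarrow> ('b \<Rightarrow> 'k) \<Rightarrow> 'k" where
  "hcounit H x = (\<Sum>i\<in>basis H. x i * eps H i)"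

(* linear map given by a matrix: sig i r = coefficient of e_r in sigma(e_i) *)
definition hlin :: "('b, 'k::comm_ring_1) hopf_sc \<Rightarrow> ('b \<Rightarrow> 'b \<Rightarrow> 'k) \<Rightarrow> ('b \<Rightarrow> 'k) \<Rightarrow> ('b \<Rightarrow> 'k)" where
  "hlin H sig v = (\<lambda>r. if r \<in> basis H then (\<Sum>i\<in>basis H. v i * sig i r) else 0)"

definition left_ideal :: "('b, 'k::field) hopf_sc \<Rightarrow> ('b \<Rightarrow> 'k) set \<Rightarrow> bool" where
  "left_ideal H I \<longleftrightarrow> I \<subseteq> {v. hvec H v} \<and> (\<lambda>_. 0) \<in> I \<and>
     (\<forall>x\<in>I. \<forall>y\<in>I. (\<lambda>b. x b + y b) \<in> I) \<and>
     (\<forall>c. \<forall>x\<in>I. (\<lambda>b. c * x b) \<in> I) \<and>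
     (\<forall>a. \<forall>x\<in>I. hvec H a \<longrightarrow> hmult H a x \<in> I)"

definition semisimple :: "('b, 'k::field) hopf_sc \<Rightarrow> bool" where
  "semisimple H \<longleftrightarrow> (\<forall>I. left_ideal H I \<longrightarrow>
     (\<exists>J. left_ideal H J \<and> I \<inter> J = {\<lambda>_. 0} \<and>
        (\<forall>v. hvec H v \<longrightarrow> (\<exists>x\<in>I. \<exists>y\<in>J. v = (\<lambda>b. x b + y b)))))"

definition normalized_integral :: "('b, 'k::field) hopf_sc \<Rightarrow> ('b \<Rightarrow> 'k)" where
  "normalized_integral H = (THE L. hvec H L \<and>
      (\<forall>a. hvec H a \<longrightarrow> hmult H a L = (\<lambda>b. hcounit H a * L b)) \<and> hcounit H L = 1)"

(* Hopf (= bialgebra) automorphism given by a matrix *)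
definition hopf_automorphism :: "('b, 'k::field) hopf_sc \<Rightarrow> ('b \<Rightarrow> 'b \<Rightarrow> 'k) \<Rightarrow> bool" where
  "hopf_automorphism H sig \<longleftrightarrow> (let B = basis H in
     bij_betw (hlin H sig) {v. hvec H v} {v. hvec H v} \<and>
     (\<forall>i\<in>B. \<forall>j\<in>B. \<forall>r\<in>B.
        (\<Sum>l\<in>B. mu H i j l * sig l r) = (\<Sum>p\<in>B. \<Sum>q\<in>B. sig i p * sig j q * mu H p q r)) \<and>
     (\<forall>r\<in>B. (\<Sum>i\<in>B. eta H i * sig i r) = eta H r) \<and>
     (\<forall>i\<in>B. \<forall>a\<in>B. \<forall>b\<in>B.
        (\<Sum>l\<in>B. sig i l * delta H l a b) = (\<Sum>p\<in>B. \<Sum>q\<in>B. delta H i p q * sig p a * sig q b)) \<and>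
     (\<forall>i\<in>B. (\<Sum>l\<in>B. sig i l * eps H l) = eps H i))"

definition has_order :: "('b, 'k::field) hopf_sc \<Rightarrow> ('b \<Rightarrow> 'b \<Rightarrow> 'k) \<Rightarrow> nat \<Rightarrow> bool" where
  "has_order H sig n \<longleftrightarrow> 0 < n \<and> (\<forall>v. hvec H v \<longrightarrow> (hlin H sig ^^ n) v = v) \<and>
     (\<forall>k. 0 < k \<and> k < n \<longrightarrow> (\<exists>v. hvec H v \<and> (hlin H sig ^^ k) v \<noteq> v))"

(* coefficient of e_{i1} (x) ... (x) e_{im} in the iterated coproduct of h *)
fun icoef :: "('b, 'k::comm_ring_1) hopf_sc \<Rightarrow> ('b \<Rightarrow> 'k) \<Rightarrow> 'b list \<Rightarrow> 'k" where
  "icoef H h [] = 0"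
| "icoef H h [i] = h i"
| "icoef H h (i # j # xs) = (\<Sum>l\<in>basis H. delta H l i j * icoef H h (l # xs))"

fun twisted_prod :: "('b, 'k::comm_ring_1) hopf_sc \<Rightarrow> (('b \<Rightarrow> 'k) \<Rightarrow> ('b \<Rightarrow> 'k)) \<Rightarrow> nat \<Rightarrow> 'b list \<Rightarrow> ('b \<Rightarrow> 'k)" where
  "twisted_prod H s k [] = hone H"
| "twisted_prod H s k (i # xs) = hmult H ((s ^^ k) (bvec H i)) (twisted_prod H s (Suc k) xs)"

(* h^[m,sigma] = sum h_1 sigma(h_2) ... sigma^{m-1}(h_m) *)
definition hopf_power :: "('b, 'k::comm_ring_1) hopf_sc \<Rightarrow> (('b \<Rightarrow> 'k) \<Rightarrow> ('b \<Rightarrow> 'k)) \<Rightarrow> nat \<Rightarrow> ('b \<Rightarrow> 'k) \<Rightarrow> ('b \<Rightarrow> 'k)" where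
  "hopf_power H s m h = (\<lambda>b. \<Sum>xs\<in>{xs. set xs \<subseteq> basis H \<and> length xs = m}.
      icoef H h xs * twisted_prod H s 0 xs b)"

(* modules: representation rho : basis -> r x r matrices, extended linearly *)
definition hact :: "('b, 'k::comm_ring_1) hopf_sc \<Rightarrow> nat \<Rightarrow> ('b \<Rightarrow> 'k mat) \<Rightarrow> ('b \<Rightarrow> 'k) \<Rightarrow> 'k mat" where
  "hact H r rho a = mat r r (\<lambda>(p, q). \<Sum>i\<in>basis H. a i * rho i $$ (p, q))"

definition is_module :: "('b, 'k::field) hopf_sc \<Rightarrow> nat \<Rightarrow> ('b \<Rightarrow> 'k mat) \<Rightarrow> bool" where
  "is_module H r rho \<longleftrightarrow> (\<forall>i\<in>basis H. rho i \<in> carrier_mat r r) \<and>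
     (\<forall>a b. hvec H a \<and> hvec H b \<longrightarrow> hact H r rho (hmult H a b) = hact H r rho a * hact H r rho b) \<and>
     hact H r rho (hone H) = 1\<^sub>m r"

definition character :: "('b, 'k::comm_ring_1) hopf_sc \<Rightarrow> nat \<Rightarrow> ('b \<Rightarrow> 'k mat) \<Rightarrow> ('b \<Rightarrow> 'k) \<Rightarrow> 'k" where
  "character H r rho a = (\<Sum>p<r. hact H r rho a $$ (p, p))"

definition twisted_indicator :: "('b, 'k::field) hopf_sc \<Rightarrow> ('b \<Rightarrow> 'b \<Rightarrow> 'k) \<Rightarrow> nat \<Rightarrow> nat \<Rightarrow> ('b \<Rightarrow> 'k mat) \<Rightarrow> 'k" where
  "twisted_indicator H sig m r rho =
     character H r rho (hopf_power H (hlin H sig) m (normalized_integral H))"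

definition indicator :: "('b, 'k::field) hopf_sc \<Rightarrow> nat \<Rightarrow> nat \<Rightarrow> ('b \<Rightarrow> 'k mat) \<Rightarrow> 'k" where
  "indicator H m r rho = character H r rho (hopf_power H id m (normalized_integral H))"

(* Smash coproduct K = A # k^G, G = <tau> of order n; the group element tau^x
   (0 <= x < n) is encoded by x, basis element e_i # p_{tau^x} by (i, x).
   The action of g = tau^y on A is hlin A tau ^^ y. *)
definition smash_coproduct :: "('b, 'k::field) hopf_sc \<Rightarrow> ('b \<Rightarrow> 'b \<Rightarrow> 'k) \<Rightarrow> nat \<Rightarrow> ('b \<times> nat, 'k) hopf_sc" where
  "smash_coproduct A tau n = \<lparr>
     basis = basis A \<times> {0..<n},
     mu = (\<lambda>(i, x) (j, y) (l, z). if x = y \<and> y = z then mu A i j l else 0),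
     eta = (\<lambda>(l, z). eta A l),
     delta = (\<lambda>(i, x) (j, y) (l', z).
        if z = (x + n - y) mod n then
          (\<Sum>l\<in>basis A. delta A i j l * (hlin A tau ^^ ((n - y) mod n)) (bvec A l) l')
        else 0),
     eps = (\<lambda>(i, x). if x = 0 then eps A i else 0),
     ant = (\<lambda>(i, x) (j, z).
        if z = (n - x) mod n then
          (hlin A tau ^^ ((n - x) mod n)) (\<lambda>b. if b \<in> basis A then ant A i b else 0) j
        else 0) \<rparr>"

(* the K-module M built from the A-module N: a # p_x acts as a if x = tau^{-1}, else 0 *)
definition induced_rep :: "nat \<Rightarrow> nat \<Rightarrow> ('b \<Rightarrow> 'k::zero mat) \<Rightarrow> ('b \<times> nat \<Rightarrow> 'k mat)" where
  "induced_rep n r rho = (\<lambda>(i, x). if x = (n - 1) mod n then rho i else 0\<^sub>m r r)"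

end

theory Submission
  imports Defs
begin

abbreviation LL :: "'a set \<Rightarrow> nat \<Rightarrow> 'a list set" where
  "LL B m \<equiv> {xs. set xs \<subseteq> B \<and> length xs = m}"

lemma sum_LL_Suc:
  assumes "finite B"
  shows "(\<Sum>xs\<in>LL B (Suc m). f xs) = (\<Sum>i\<in>B. \<Sum>xs\<in>LL B m. f (i # xs))"
proof -
  have inj: "inj_on (\<lambda>(xs, n). n#xs) (LL B m \<times> B)" by (auto simp: inj_on_def)
  have "(\<Sum>xs\<in>LL B (Suc m). f xs) = (\<Sum>p\<in>LL B m \<times> B. f (snd p # fst p))"
    unfolding lists_length_Suc_eq by (subst sum.reindex[OF inj]) (auto intro!: sum.cong)
  also have "\<dots> = (\<Sum>xs\<in>LL B m. \<Sum>i\<in>B. f (i # xs))"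
    by (simp add: sum.cartesian_product case_prod_unfold)
  also have "\<dots> = (\<Sum>i\<in>B. \<Sum>xs\<in>LL B m. f (i # xs))" by (rule sum.swap)
  finally show ?thesis .
qed

lemma LL_0: "LL B 0 = {[]}" by auto
lemma LL_0': "{xs. xs = [] \<and> set xs \<subseteq> B} = {[]}" by auto

definition TT :: "('b, 'k::comm_ring_1) hopf_sc \<Rightarrow> ('b \<Rightarrow> 'b \<Rightarrow> 'k) \<Rightarrow> nat \<Rightarrow> int \<Rightarrow> 'b \<Rightarrow> 'b \<Rightarrow> 'k" where
  "TT A tau n c i j = ((hlin A tau ^^ nat (c mod int n)) (bvec A i)) j"

fun PP :: "('b, 'k::comm_ring_1) hopf_sc \<Rightarrow> ('b \<Rightarrow> 'b \<Rightarrow> 'k) \<Rightarrow> nat \<Rightarrow> int \<Rightarrow> 'b list \<Rightarrow> ('b \<times> nat) list \<Rightarrow> 'k" where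
  "PP A tau n c [] [] = 1"
| "PP A tau n c (i # ks) (w # ws) = TT A tau n c i (fst w) * PP A tau n (c - int (snd w)) ks ws"
| "PP A tau n c _ _ = 0"

fun QQ :: "('b, 'k::comm_ring_1) hopf_sc \<Rightarrow> ('b \<Rightarrow> 'b \<Rightarrow> 'k) \<Rightarrow> nat \<Rightarrow> int \<Rightarrow> 'b list \<Rightarrow> 'b list \<Rightarrow> 'k" where
  "QQ A tau n c [] [] = 1"
| "QQ A tau n c (i # ks) (j # js) = TT A tau n c i j * QQ A tau n (c + 1) ks js"
| "QQ A tau n c _ _ = 0"

definition emb :: "('b \<Rightarrow> 'k::zero) \<Rightarrow> nat \<Rightarrow> ('b \<times> nat \<Rightarrow> 'k)" where
  "emb L x = (\<lambda>(i, z). if z = x then L i else 0)"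

fun pprod :: "('b, 'k::comm_ring_1) hopf_sc \<Rightarrow> 'b list \<Rightarrow> ('b \<Rightarrow> 'k)" where
  "pprod H [] = hone H"
| "pprod H (i # ks) = hmult H (bvec H i) (pprod H ks)"

lemma TT_cong: "c mod int n = c' mod int n \<Longrightarrow> TT A tau n c = TT A tau n c'"
  by (simp add: TT_def fun_eq_iff)

lemma PP_cong: "c mod int n = c' mod int n \<Longrightarrow> PP A tau n c ks ws = PP A tau n c' ks ws"
proof (induction ks arbitrary: ws c c')
  case Nil then show ?case by (cases ws) auto
next
  case (Cons i ks)
  show ?case
  proof (cases ws)
    case (Cons w ws')
    have "(c - int (snd w)) mod int n = (c' - int (snd w)) mod int n"
      using Cons.prems by (metis mod_diff_left_eq)
    then show ?thesis using Cons Cons.IH[of "c - int (snd w)" "c' - int (snd w)"] Cons.prems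
      by (simp add: TT_cong[OF Cons.prems])
  qed simp
qed

lemma TT_zero: "c mod int n = 0 \<Longrightarrow> TT A tau n c i j = (if j = i \<and> j \<in> basis A then 1 else 0)"
  by (simp add: TT_def bvec_def)

lemma nat_neg_mod: "y < n \<Longrightarrow> nat (- int y mod int n) = (n - y) mod n"
proof (cases "y = 0")
  case False
  assume "y < n"
  then have "- int y mod int n = int n - int y"
    using False by (simp add: zmod_zminus1_eq_if)
  then show ?thesis using \<open>y < n\<close> False by simp
qed simp

lemma mod_equiv_aux:
  fixes y1 y2 z n :: nat
  assumes "y1 < n" "y2 < n" "z < n"
  shows "(y2 = (z + n - y1) mod n) = (z = (y1 + y2) mod n)"
proof (cases "y1 \<le> z")
  case True
  then have e: "(z + n - y1) mod n = z - y1"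
    using assms by (simp add: le_mod_geq)
  show ?thesis
  proof (cases "y1 + y2 < n")
    case True then show ?thesis using e assms \<open>y1 \<le> z\<close> by auto
  next
    case False then show ?thesis using e assms \<open>y1 \<le> z\<close> by (auto simp: le_mod_geq)
  qed
next
  case False
  then have e: "(z + n - y1) mod n = z + n - y1" using assms by simp
  show ?thesis
  proof (cases "y1 + y2 < n")
    case True then show ?thesis using e assms False by auto
  next
    case False then show ?thesis using e assms \<open>\<not> y1 \<le> z\<close> by (auto simp: le_mod_geq)
  qed
qed

lemma icoefK:
  fixes A :: "('b, 'k::field) hopf_sc"
  assumes finB: "finite (basis A)" and npos: "0 < n" and xn: "x < n"
  shows "H = smash_coproduct A tau n \<Longrightarrow> h = emb L x \<Longrightarrow> set ws \<subseteq> basis H \<Longrightarrow> ws \<noteq> [] \<Longrightarrow>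
    icoef H h ws = (if sum_list (map snd ws) mod n = x then
       (\<Sum>ks\<in>LL (basis A) (length ws). icoef A L ks * PP A tau n 0 ks ws) else 0)"
proof (induction H h ws rule: icoef.induct)
  case (1 H h) then show ?case by simp
next
  case (2 H h a)
  obtain j y where a: "a = (j, y)" by fastforce
  have jy: "j \<in> basis A" "y < n" using 2 a by (auto simp: smash_coproduct_def)
  have "(\<Sum>ks\<in>LL (basis A) (Suc 0). icoef A L ks * PP A tau n 0 ks [a])
      = (\<Sum>i\<in>basis A. L i * (if j = i \<and> j \<in> basis A then 1 else 0))"
    using finB by (simp add: sum_LL_Suc[OF finB] LL_0 LL_0' a TT_zero)
  also have "\<dots> = L j" using jy finB by (simp add: if_distrib cong: if_cong)
  finally have e: "(\<Sum>ks\<in>LL (basis A) (Suc 0). icoef A L ks * PP A tau n 0 ks [a]) = L j" .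
  show ?case using 2(1,2) a jy e by (cases "y = x") (simp_all add: emb_def)
next
  case (3 H h a b xs)
  obtain j1 y1 where a: "a = (j1, y1)" by fastforce
  obtain j2 y2 where b: "b = (j2, y2)" by fastforce
  have H: "H = smash_coproduct A tau n" and h: "h = emb L x" using 3 by auto
  have bK: "basis H = basis A \<times> {0..<n}" using H by (simp add: smash_coproduct_def)
  have jy: "j1 \<in> basis A" "y1 < n" "j2 \<in> basis A" "y2 < n" "set xs \<subseteq> basis A \<times> {0..<n}"
    using 3(4) a b bK by auto
  define S where "S = sum_list (map snd xs)"
  define k where "k = length xs"
  define R where "R l1 z = (\<Sum>ks\<in>LL (basis A) k. icoef A L (l1 # ks) * PP A tau n (- int z) ks xs)" for l1 z
  have IH': "icoef H h ((l1, z) # xs) = (if (z + S) mod n = x then R l1 z else 0)"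
    if l1: "l1 \<in> basis A" and z: "z < n" for l1 z
  proof -
    have "icoef H h ((l1, z) # xs) = (if (z + S) mod n = x then
       (\<Sum>ks\<in>LL (basis A) (Suc k). icoef A L ks * PP A tau n 0 ks ((l1, z) # xs)) else 0)"
      using 3(1)[of "(l1, z)"] l1 z jy bK H h by (simp add: S_def k_def)
    moreover have "(\<Sum>ks\<in>LL (basis A) (Suc k). icoef A L ks * PP A tau n 0 ks ((l1, z) # xs))
        = (\<Sum>i\<in>basis A. if i = l1 then (\<Sum>ks\<in>LL (basis A) k. icoef A L (i # ks) * PP A tau n (- int z) ks xs) else 0)"
      unfolding sum_LL_Suc[OF finB]
      by (rule sum.cong) (auto simp: TT_zero l1 sum_distrib_left)
    moreover have "\<dots> = R l1 z" using l1 finB by (simp add: R_def)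
    ultimately show ?thesis by simp
  qed
  define z0 where "z0 = (y1 + y2) mod n"
  have z0n: "z0 < n" using npos by (simp add: z0_def)
  define D where "D l1 = (\<Sum>p\<in>basis A. delta A l1 j1 p * (hlin A tau ^^ ((n - y1) mod n)) (bvec A p) j2)" for l1
  have dK: "delta H (l1, z) a b = (if z = z0 then D l1 else 0)" if "z < n" for l1 z
    using mod_equiv_aux[OF jy(2) jy(4) that] H a b by (simp add: smash_coproduct_def D_def z0_def)
  define R' where "R' l1 = (\<Sum>ks\<in>LL (basis A) k. icoef A L (l1 # ks) * PP A tau n (- int y1 - int y2) ks xs)" for l1
  have RR: "R l1 z0 = R' l1" for l1
  proof -
    have "(- int z0) mod int n = (- int y1 - int y2) mod int n"
      unfolding z0_def by (metis mod_minus_eq of_nat_add of_nat_mod minus_add_distrib diff_conv_add_uminus)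
    then show ?thesis unfolding R_def R'_def using PP_cong by metis
  qed
  have "icoef H h (a # b # xs) = (\<Sum>l\<in>basis H. delta H l a b * icoef H h (l # xs))" by simp
  also have "\<dots> = (\<Sum>l1\<in>basis A. \<Sum>z\<in>{0..<n}. delta H (l1, z) a b * icoef H h ((l1, z) # xs))"
    unfolding bK by (simp add: sum.cartesian_product)
  also have "\<dots> = (\<Sum>l1\<in>basis A. \<Sum>z\<in>{0..<n}. if z = z0 then D l1 * (if (z0 + S) mod n = x then R l1 z0 else 0) else 0)"
    by (intro sum.cong refl) (simp add: dK IH')
  also have "\<dots> = (\<Sum>l1\<in>basis A. D l1 * (if (z0 + S) mod n = x then R' l1 else 0))"
    unfolding RR using z0n by simp
  also have "\<dots> = (if (y1 + y2 + S) mod n = x then (\<Sum>l1\<in>basis A. D l1 * R' l1) else 0)"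
    by (simp add: z0_def mod_add_left_eq)
  finally have L1: "icoef H h (a # b # xs) = \<dots>" .
  have "(\<Sum>ks\<in>LL (basis A) (length (a # b # xs)). icoef A L ks * PP A tau n 0 ks (a # b # xs))
     = (\<Sum>i1\<in>basis A. \<Sum>i2\<in>basis A. \<Sum>ks\<in>LL (basis A) k.
          icoef A L (i1 # i2 # ks) * (TT A tau n 0 i1 j1 * (TT A tau n (- int y1) i2 j2 * PP A tau n (- int y1 - int y2) ks xs)))"
    by (simp add: sum_LL_Suc[OF finB] k_def a b)
  also have "\<dots> = (\<Sum>i1\<in>basis A. if i1 = j1 then (\<Sum>i2\<in>basis A. \<Sum>ks\<in>LL (basis A) k.
          icoef A L (i1 # i2 # ks) * (TT A tau n (- int y1) i2 j2 * PP A tau n (- int y1 - int y2) ks xs)) else 0)"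
    by (rule sum.cong) (auto simp: TT_zero jy)
  also have "\<dots> = (\<Sum>i2\<in>basis A. \<Sum>ks\<in>LL (basis A) k.
          icoef A L (j1 # i2 # ks) * (TT A tau n (- int y1) i2 j2 * PP A tau n (- int y1 - int y2) ks xs))"
    using jy finB by simp
  also have "\<dots> = (\<Sum>i2\<in>basis A. \<Sum>ks\<in>LL (basis A) k. \<Sum>l\<in>basis A.
          delta A l j1 i2 * icoef A L (l # ks) * (TT A tau n (- int y1) i2 j2 * PP A tau n (- int y1 - int y2) ks xs))"
    by (simp add: sum_distrib_right)
  also have "\<dots> = (\<Sum>i2\<in>basis A. \<Sum>l\<in>basis A. \<Sum>ks\<in>LL (basis A) k.
          delta A l j1 i2 * icoef A L (l # ks) * (TT A tau n (- int y1) i2 j2 * PP A tau n (- int y1 - int y2) ks xs))"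
    by (rule sum.cong[OF refl]) (rule sum.swap)
  also have "\<dots> = (\<Sum>l\<in>basis A. \<Sum>i2\<in>basis A. \<Sum>ks\<in>LL (basis A) k.
          delta A l j1 i2 * icoef A L (l # ks) * (TT A tau n (- int y1) i2 j2 * PP A tau n (- int y1 - int y2) ks xs))"
    by (rule sum.swap)
  also have "\<dots> = (\<Sum>l1\<in>basis A. D l1 * R' l1)"
    unfolding D_def R'_def TT_def nat_neg_mod[OF jy(2)]
    by (simp add: sum_distrib_left sum_distrib_right mult_ac, rule sum.cong[OF refl], rule sum.swap)
  finally have L2: "(\<Sum>ks\<in>LL (basis A) (length (a # b # xs)). icoef A L ks * PP A tau n 0 ks (a # b # xs)) = (\<Sum>l1\<in>basis A. D l1 * R' l1)" .
  show ?case unfolding L1 L2 by (simp add: a b S_def add.assoc)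
qed

lemma tp_id: "twisted_prod H id k xs = pprod H xs"
  by (induction xs arbitrary: k) simp_all

lemma hvec_hlin: "hvec H (hlin H s v)" by (simp add: hvec_def hlin_def)
lemma hvec_bvec: "hvec H (bvec H i)" by (simp add: hvec_def bvec_def)
lemma hvec_hmult: "hvec H (hmult H a b)" by (simp add: hvec_def hmult_def)
lemma hvec_funpow: "hvec H v \<Longrightarrow> hvec H ((hlin H s ^^ k) v)"
  by (induction k) (simp_all add: hvec_hlin)

lemma hmult_bvec_left:
  assumes "finite (basis H)" "i \<in> basis H"
  shows "hmult H (bvec H i) w l = (if l \<in> basis H then (\<Sum>j\<in>basis H. w j * mu H i j l) else 0)"
proof -
  have "(\<Sum>i'\<in>basis H. \<Sum>j\<in>basis H. bvec H i i' * w j * mu H i' j l)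
      = (\<Sum>i'\<in>basis H. if i' = i then (\<Sum>j\<in>basis H. w j * mu H i' j l) else 0)"
    by (rule sum.cong) (auto simp: bvec_def)
  then show ?thesis using assms by (simp add: hmult_def)
qed

lemma hmult_lin1:
  assumes "finite (basis H)" "hvec H v"
  shows "hmult H v w l = (\<Sum>j\<in>basis H. v j * hmult H (bvec H j) w l)"
proof (cases "l \<in> basis H")
  case True
  have "(\<Sum>j\<in>basis H. v j * hmult H (bvec H j) w l) = (\<Sum>j\<in>basis H. v j * (\<Sum>j'\<in>basis H. w j' * mu H j j' l))"
    using assms True by (intro sum.cong refl) (simp add: hmult_bvec_left)
  then show ?thesis using True by (simp add: hmult_def sum_distrib_left mult_ac)
qed (simp add: hmult_def)

lemma hmult_lin2:
  "hmult H u (\<lambda>b. \<Sum>x\<in>S. c x * f x b) l = (\<Sum>x\<in>S. c x * hmult H u (f x) l)"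
proof (cases "l \<in> basis H")
  case True
  have "(\<Sum>i\<in>basis H. \<Sum>j\<in>basis H. u i * (\<Sum>x\<in>S. c x * f x j) * mu H i j l)
      = (\<Sum>i\<in>basis H. \<Sum>j\<in>basis H. \<Sum>x\<in>S. c x * (u i * f x j * mu H i j l))"
    by (simp add: sum_distrib_left sum_distrib_right mult_ac)
  also have "\<dots> = (\<Sum>i\<in>basis H. \<Sum>x\<in>S. \<Sum>j\<in>basis H. c x * (u i * f x j * mu H i j l))"
    by (rule sum.cong[OF refl]) (rule sum.swap)
  also have "\<dots> = (\<Sum>x\<in>S. \<Sum>i\<in>basis H. \<Sum>j\<in>basis H. c x * (u i * f x j * mu H i j l))"
    by (rule sum.swap)
  also have "\<dots> = (\<Sum>x\<in>S. c x * (\<Sum>i\<in>basis H. \<Sum>j\<in>basis H. u i * f x j * mu H i j l))"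
    by (simp add: sum_distrib_left)
  finally show ?thesis using True by (simp add: hmult_def)
next
  case False then show ?thesis by (simp add: hmult_def)
qed

lemma funpow_period:
  assumes per: "\<forall>v. hvec A v \<longrightarrow> (hlin A tau ^^ n) v = v" and v: "hvec A v"
  shows "(hlin A tau ^^ c) v = (hlin A tau ^^ (c mod n)) v"
proof -
  have q: "(hlin A tau ^^ (n * q)) v = v" for q
  proof (induction q)
    case (Suc q)
    have "(hlin A tau ^^ (n * Suc q)) v = (hlin A tau ^^ n) ((hlin A tau ^^ (n * q)) v)"
      by (simp add: funpow_add)
    then show ?case using Suc per v by simp
  qed simp
  have "(hlin A tau ^^ c) v = (hlin A tau ^^ (c mod n)) ((hlin A tau ^^ (n * (c div n))) v)"
    by (metis funpow_add o_apply mod_div_mult_eq mult.commute)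
  then show ?thesis using q by simp
qed

lemma TT_nat:
  assumes per: "\<forall>v. hvec A v \<longrightarrow> (hlin A tau ^^ n) v = v"
  shows "TT A tau n (int c) i j = ((hlin A tau ^^ c) (bvec A i)) j"
  unfolding TT_def using funpow_period[OF per hvec_bvec, of c i]
  by (simp add: nat_mod_as_int[symmetric] zmod_int[symmetric])

lemma tp_expand:
  assumes finB: "finite (basis A)" and per: "\<forall>v. hvec A v \<longrightarrow> (hlin A tau ^^ n) v = v"
  shows "set ks \<subseteq> basis A \<Longrightarrow> twisted_prod A (hlin A tau) c ks l
     = (\<Sum>js\<in>LL (basis A) (length ks). QQ A tau n (int c) ks js * pprod A js l)"
proof (induction ks arbitrary: c l)
  case Nil then show ?case by (simp add: LL_0')
next
  case (Cons i ks)
  let ?v = "(hlin A tau ^^ c) (bvec A i)"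
  have IH: "twisted_prod A (hlin A tau) (Suc c) ks = (\<lambda>b. \<Sum>js\<in>LL (basis A) (length ks). QQ A tau n (int (Suc c)) ks js * pprod A js b)"
    using Cons by auto
  have "twisted_prod A (hlin A tau) c (i # ks) l = hmult A ?v (twisted_prod A (hlin A tau) (Suc c) ks) l" by simp
  also have "\<dots> = (\<Sum>j\<in>basis A. ?v j * hmult A (bvec A j) (twisted_prod A (hlin A tau) (Suc c) ks) l)"
    by (rule hmult_lin1[OF finB hvec_funpow[OF hvec_bvec]])
  also have "\<dots> = (\<Sum>j\<in>basis A. ?v j * (\<Sum>js\<in>LL (basis A) (length ks). QQ A tau n (int (Suc c)) ks js * hmult A (bvec A j) (pprod A js) l))"
    unfolding IH hmult_lin2 ..
  also have "\<dots> = (\<Sum>j\<in>basis A. \<Sum>js\<in>LL (basis A) (length ks). QQ A tau n (int c) (i # ks) (j # js) * pprod A (j # js) l)"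
    by (simp add: TT_nat[OF per] sum_distrib_left mult_ac add.commute)
  also have "\<dots> = (\<Sum>js\<in>LL (basis A) (length (i # ks)). QQ A tau n (int c) (i # ks) js * pprod A js l)"
    by (simp add: sum_LL_Suc[OF finB])
  finally show ?case .
qed

lemma basisK: "basis (smash_coproduct A tau n) = basis A \<times> {0..<n}"
  by (simp add: smash_coproduct_def)

lemma muK: "mu (smash_coproduct A tau n) (i, x) (j, y) (l, z) = (if x = y \<and> y = z then mu A i j l else 0)"
  by (simp add: smash_coproduct_def)

lemma hmultK_bvec:
  assumes finB: "finite (basis A)" and w: "(i0, x0) \<in> basis A \<times> {0..<n}" and z: "z < n"
  shows "hmult (smash_coproduct A tau n) (bvec (smash_coproduct A tau n) (i0, x0)) v (l, z)
    = (if x0 = z then hmult A (bvec A i0) (\<lambda>j. v (j, z)) l else 0)"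
proof -
  let ?K = "smash_coproduct A tau n"
  have fK: "finite (basis ?K)" using finB by (simp add: basisK)
  have "hmult ?K (bvec ?K (i0, x0)) v (l, z) = (if (l, z) \<in> basis ?K then
      (\<Sum>q\<in>basis ?K. v q * mu ?K (i0, x0) q (l, z)) else 0)"
    using hmult_bvec_left[OF fK, of "(i0, x0)"] w by (simp add: basisK)
  also have "\<dots> = (if l \<in> basis A then
      (\<Sum>j\<in>basis A. \<Sum>y\<in>{0..<n}. v (j, y) * (if x0 = y \<and> y = z then mu A i0 j l else 0)) else 0)"
    using z by (simp add: basisK sum.cartesian_product' muK)
  also have "\<dots> = (if x0 = z then (if l \<in> basis A then (\<Sum>j\<in>basis A. v (j, z) * mu A i0 j l) else 0) else 0)"
  proof -
    have inner: "(\<Sum>y\<in>{0..<n}. v (j, y) * (if x0 = y \<and> y = z then mu A i0 j l else 0))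
        = (if x0 = z then v (j, z) * mu A i0 j l else 0)" for j
    proof -
      have "(\<Sum>y\<in>{0..<n}. v (j, y) * (if x0 = y \<and> y = z then mu A i0 j l else 0))
          = (\<Sum>y\<in>{0..<n}. if y = z then (if x0 = z then v (j, z) * mu A i0 j l else 0) else 0)"
        by (rule sum.cong) auto
      then show ?thesis using z by simp
    qed
    show ?thesis unfolding inner by simp
  qed
  also have "\<dots> = (if x0 = z then hmult A (bvec A i0) (\<lambda>j. v (j, z)) l else 0)"
    using hmult_bvec_left[OF finB, of i0] w by simp
  finally show ?thesis .
qed

lemma pprodK:
  assumes finB: "finite (basis A)" and z: "z < n"
  shows "set ws \<subseteq> basis A \<times> {0..<n} \<Longrightarrow> pprod (smash_coproduct A tau n) ws (l, z)
     = (if \<forall>w\<in>set ws. snd w = z then pprod A (map fst ws) l else 0)"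
proof (induction ws arbitrary: l)
  case Nil then show ?case using z by (simp add: hone_def basisK) (simp add: smash_coproduct_def)
next
  case (Cons w ws)
  obtain i0 x0 where w: "w = (i0, x0)" by fastforce
  have IH: "(\<lambda>j. pprod (smash_coproduct A tau n) ws (j, z)) = (\<lambda>j. if \<forall>w\<in>set ws. snd w = z then pprod A (map fst ws) j else 0)"
    using Cons by auto
  show ?case
  proof (cases "\<forall>w\<in>set ws. snd w = z")
    case True
    then show ?thesis using Cons.prems w by (simp add: hmultK_bvec[OF finB _ z] IH)
  next
    case False
    have nP: "(\<forall>w\<in>set ws. snd w = z) = False" using False by blast
    have z0: "(\<lambda>j. pprod (smash_coproduct A tau n) ws (j, z)) = (\<lambda>j. 0)" unfolding IH nP by simp
    have "pprod (smash_coproduct A tau n) (w # ws) (l, z) = (if x0 = z then hmult A (bvec A i0) (\<lambda>j. pprod (smash_coproduct A tau n) ws (j, z)) l else 0)"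
      using Cons.prems w by (simp add: hmultK_bvec[OF finB _ z])
    also have "\<dots> = 0" unfolding z0 by (simp add: hmult_def)
    finally have X: "pprod (smash_coproduct A tau n) (w # ws) (l, z) = 0" .
    have nP2: "(\<forall>w\<in>set (w # ws). snd w = z) = False" using False by auto
    show ?thesis unfolding X nP2 by simp
  qed
qed

lemma hopf_unit:
  assumes "is_hopf_algebra A" "j \<in> basis A" "l \<in> basis A"
  shows "(\<Sum>i\<in>basis A. eta A i * mu A i j l) = (if j = l then 1 else 0)"
    and "(\<Sum>i\<in>basis A. eta A i * mu A j i l) = (if j = l then 1 else 0)"
  using assms unfolding is_hopf_algebra_def Let_def by simp_all

lemma hopf_fin: "is_hopf_algebra A \<Longrightarrow> finite (basis A)"
  unfolding is_hopf_algebra_def Let_def by simp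

lemma hopf_counit_mult:
  assumes "is_hopf_algebra A" "i \<in> basis A" "j \<in> basis A"
  shows "(\<Sum>l\<in>basis A. mu A i j l * eps A l) = eps A i * eps A j"
  using assms unfolding is_hopf_algebra_def Let_def by simp

lemma hopf_eta_eps: "is_hopf_algebra A \<Longrightarrow> (\<Sum>i\<in>basis A. eta A i * eps A i) = 1"
  unfolding is_hopf_algebra_def Let_def by simp

lemma li_sub: "left_ideal H I \<Longrightarrow> x \<in> I \<Longrightarrow> hvec H x"
  unfolding left_ideal_def by auto
lemma li_add: "left_ideal H I \<Longrightarrow> x \<in> I \<Longrightarrow> y \<in> I \<Longrightarrow> (\<lambda>b. x b + y b) \<in> I"
  unfolding left_ideal_def by simp
lemma li_smult: "left_ideal H I \<Longrightarrow> x \<in> I \<Longrightarrow> (\<lambda>b. c * x b) \<in> I"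
  unfolding left_ideal_def by simp
lemma li_mult: "left_ideal H I \<Longrightarrow> x \<in> I \<Longrightarrow> hvec H a \<Longrightarrow> hmult H a x \<in> I"
  unfolding left_ideal_def by simp

context
  fixes A :: "('b, 'k::field) hopf_sc"
  assumes hopf: "is_hopf_algebra A"
begin

lemma finB: "finite (basis A)" using hopf_fin[OF hopf] .

lemma counit_mult: "hcounit A (hmult A a b) = hcounit A a * hcounit A b"
proof -
  have "hcounit A (hmult A a b) = (\<Sum>l\<in>basis A. (\<Sum>i\<in>basis A. \<Sum>j\<in>basis A. a i * b j * mu A i j l) * eps A l)"
    by (simp add: hcounit_def hmult_def)
  also have "\<dots> = (\<Sum>l\<in>basis A. \<Sum>i\<in>basis A. \<Sum>j\<in>basis A. a i * b j * (mu A i j l * eps A l))"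
    by (simp add: sum_distrib_left sum_distrib_right mult_ac)
  also have "\<dots> = (\<Sum>i\<in>basis A. \<Sum>l\<in>basis A. \<Sum>j\<in>basis A. a i * b j * (mu A i j l * eps A l))"
    by (rule sum.swap)
  also have "\<dots> = (\<Sum>i\<in>basis A. \<Sum>j\<in>basis A. \<Sum>l\<in>basis A. a i * b j * (mu A i j l * eps A l))"
    by (rule sum.cong[OF refl]) (rule sum.swap)
  also have "\<dots> = (\<Sum>i\<in>basis A. \<Sum>j\<in>basis A. a i * b j * (\<Sum>l\<in>basis A. mu A i j l * eps A l))"
    by (simp add: sum_distrib_left)
  also have "\<dots> = (\<Sum>i\<in>basis A. \<Sum>j\<in>basis A. a i * b j * (eps A i * eps A j))"
    by (intro sum.cong refl) (simp add: hopf_counit_mult[OF hopf])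
  also have "\<dots> = hcounit A a * hcounit A b"
    by (simp add: hcounit_def sum_distrib_left sum_distrib_right mult_ac) (subst sum.swap, simp add: mult_ac)
  finally show ?thesis .
qed

lemma counit_one: "hcounit A (hone A) = 1"
  using hopf_eta_eps[OF hopf] by (simp add: hcounit_def hone_def)

lemma hvec_hone: "hvec A (hone A)" by (simp add: hvec_def hone_def)

lemma mult_one_right: assumes "hvec A d" shows "hmult A d (hone A) = d"
proof
  fix l show "hmult A d (hone A) l = d l"
  proof (cases "l \<in> basis A")
    case True
    have "(\<Sum>i\<in>basis A. \<Sum>j\<in>basis A. d i * hone A j * mu A i j l) = (\<Sum>i\<in>basis A. d i * (\<Sum>j\<in>basis A. eta A j * mu A i j l))"
      by (intro sum.cong refl) (simp add: hone_def sum_distrib_left mult_ac)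
    also have "\<dots> = (\<Sum>i\<in>basis A. if i = l then d i else 0)"
      by (intro sum.cong refl) (simp add: hopf_unit(2)[OF hopf _ True])
    also have "\<dots> = d l" using True finB by simp
    finally show ?thesis using True by (simp add: hmult_def)
  qed (use assms in \<open>simp add: hmult_def hvec_def\<close>)
qed

lemma mult_one_left: assumes "hvec A d" shows "hmult A (hone A) d = d"
proof
  fix l show "hmult A (hone A) d l = d l"
  proof (cases "l \<in> basis A")
    case True
    have "(\<Sum>i\<in>basis A. \<Sum>j\<in>basis A. hone A i * d j * mu A i j l) = (\<Sum>j\<in>basis A. \<Sum>i\<in>basis A. hone A i * d j * mu A i j l)"
      by (rule sum.swap)
    also have "\<dots> = (\<Sum>j\<in>basis A. d j * (\<Sum>i\<in>basis A. eta A i * mu A i j l))"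
      by (intro sum.cong refl) (simp add: hone_def sum_distrib_left mult_ac)
    also have "\<dots> = (\<Sum>j\<in>basis A. if j = l then d j else 0)"
      by (intro sum.cong refl) (simp add: hopf_unit(1)[OF hopf _ True])
    also have "\<dots> = d l" using True finB by simp
    finally show ?thesis using True by (simp add: hmult_def)
  qed (use assms in \<open>simp add: hmult_def hvec_def\<close>)
qed

lemma hmult_add2: "hmult A a (\<lambda>b. x b + y b) = (\<lambda>b. hmult A a x b + hmult A a y b)"
  by (auto simp: hmult_def fun_eq_iff distrib_left distrib_right sum.distrib)

lemma hmult_smult2: "hmult A a (\<lambda>b. c * x b) = (\<lambda>b. c * hmult A a x b)"
  by (auto simp: hmult_def fun_eq_iff sum_distrib_left mult_ac)

lemma hcounit_add: "hcounit A (\<lambda>b. x b + y b) = hcounit A x + hcounit A y"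
  by (simp add: hcounit_def distrib_right sum.distrib)

lemma hcounit_smult: "hcounit A (\<lambda>b. c * x b) = c * hcounit A x"
  by (simp add: hcounit_def sum_distrib_left mult_ac)

definition PI where "PI L \<longleftrightarrow> hvec A L \<and>
      (\<forall>a. hvec A a \<longrightarrow> hmult A a L = (\<lambda>b. hcounit A a * L b)) \<and> hcounit A L = 1"

lemma integral_exists: assumes ss: "semisimple A" shows "\<exists>L. PI L"
proof -
  define I where "I = {v. hvec A v \<and> hcounit A v = 0}"
  have li: "left_ideal A I" unfolding left_ideal_def
  proof (intro conjI ballI allI impI)
    show "I \<subseteq> {v. hvec A v}" by (auto simp: I_def)
    show "(\<lambda>_. 0) \<in> I" by (simp add: I_def hvec_def hcounit_def)
  next
    fix x y assume "x \<in> I" "y \<in> I" then show "(\<lambda>b. x b + y b) \<in> I" by (simp add: I_def hcounit_add hvec_def)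
  next
    fix c x assume "x \<in> I" then show "(\<lambda>b. c * x b) \<in> I" by (simp add: I_def hcounit_smult hvec_def)
  next
    fix a x assume "x \<in> I" "hvec A a" then show "hmult A a x \<in> I" by (simp add: I_def counit_mult hvec_hmult)
  qed
  then obtain J where J: "left_ideal A J" "I \<inter> J = {\<lambda>_. 0}"
      "\<forall>v. hvec A v \<longrightarrow> (\<exists>x\<in>I. \<exists>y\<in>J. v = (\<lambda>b. x b + y b))"
    using ss[unfolded semisimple_def, rule_format, OF li] by (elim exE conjE) blast
  obtain x y where xy: "x \<in> I" "y \<in> J" "hone A = (\<lambda>b. x b + y b)" using J(3) hvec_hone by blast
  have yv: "hvec A y" using li_sub[OF J(1) xy(2)] .
  have "hcounit A (hone A) = hcounit A x + hcounit A y" by (subst xy(3)) (rule hcounit_add)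
  moreover have "hcounit A x = 0" using xy(1) by (simp add: I_def)
  ultimately have ey: "hcounit A y = 1" using counit_one by simp
  have "hmult A a y = (\<lambda>b. hcounit A a * y b)" if a: "hvec A a" for a
  proof -
    define z where "z = (\<lambda>b. hmult A a y b + (- hcounit A a) * y b)"
    have zJ: "z \<in> J" unfolding z_def
      by (rule li_add[OF J(1) li_mult[OF J(1) xy(2) a] li_smult[OF J(1) xy(2)]])
    have "hvec A z" using yv by (simp add: z_def hvec_def hmult_def)
    moreover have "hcounit A z = 0"
      unfolding z_def hcounit_add hcounit_smult counit_mult ey by simp
    ultimately have "z \<in> I" by (simp add: I_def)
    then have z0: "z = (\<lambda>_. 0)" using zJ J(2) by blast
    show ?thesis
    proof
      fix b
      have "z b = 0" using z0 by simp
      then show "hmult A a y b = hcounit A a * y b" unfolding z_def by simp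
    qed
  qed
  then show ?thesis using yv ey unfolding PI_def by blast
qed

lemma integral_unique: assumes ss: "semisimple A" and L1: "PI L1" and L2: "PI L2" shows "L1 = L2"
proof -
  define d where "d = (\<lambda>b. L1 b + (-1) * L2 b)"
  have dv: "hvec A d" using L1 L2 by (simp add: PI_def d_def hvec_def)
  have dint: "hmult A a d = (\<lambda>b. hcounit A a * d b)" if "hvec A a" for a
    using L1 L2 that unfolding PI_def d_def hmult_add2 hmult_smult2 by (auto simp: fun_eq_iff algebra_simps)
  have ed: "hcounit A d = 0" using L1 L2 unfolding PI_def d_def hcounit_add hcounit_smult by simp
  define I where "I = {v. \<exists>c. v = (\<lambda>b. c * d b)}"
  have li: "left_ideal A I"
    unfolding left_ideal_def I_def
  proof (intro conjI ballI allI impI)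
    show "{v. \<exists>c. v = (\<lambda>b. c * d b)} \<subseteq> {v. hvec A v}" using dv by (auto simp: hvec_def)
    show "(\<lambda>_. 0) \<in> {v. \<exists>c. v = (\<lambda>b. c * d b)}" by (rule CollectI, rule exI[of _ 0]) simp
  next
    fix x y assume "x \<in> {v. \<exists>c. v = (\<lambda>b. c * d b)}" "y \<in> {v. \<exists>c. v = (\<lambda>b. c * d b)}"
    then obtain c1 c2 where "x = (\<lambda>b. c1 * d b)" "y = (\<lambda>b. c2 * d b)" by blast
    then show "(\<lambda>b. x b + y b) \<in> {v. \<exists>c. v = (\<lambda>b. c * d b)}"
      by (intro CollectI exI[of _ "c1 + c2"]) (simp add: fun_eq_iff distrib_right)
  next
    fix c x assume "x \<in> {v. \<exists>c. v = (\<lambda>b. c * d b)}"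
    then obtain c1 where "x = (\<lambda>b. c1 * d b)" by blast
    then show "(\<lambda>b. c * x b) \<in> {v. \<exists>c. v = (\<lambda>b. c * d b)}"
      by (intro CollectI exI[of _ "c * c1"]) (simp add: fun_eq_iff)
  next
    fix a x assume "x \<in> {v. \<exists>c. v = (\<lambda>b. c * d b)}" "hvec A a"
    then obtain c1 where xc1: "x = (\<lambda>b. c1 * d b)" by blast
    show "hmult A a x \<in> {v. \<exists>c. v = (\<lambda>b. c * d b)}"
      unfolding xc1 hmult_smult2 dint[OF \<open>hvec A a\<close>]
      by (intro CollectI exI[of _ "c1 * hcounit A a"]) (simp add: mult_ac)
  qed
  then obtain J where J: "left_ideal A J" "I \<inter> J = {\<lambda>_. 0}"
      "\<forall>v. hvec A v \<longrightarrow> (\<exists>x\<in>I. \<exists>y\<in>J. v = (\<lambda>b. x b + y b))"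
    using ss[unfolded semisimple_def, rule_format, OF li] by (elim exE conjE) blast
  obtain x y where xy: "x \<in> I" "y \<in> J" "hone A = (\<lambda>b. x b + y b)" using J(3) hvec_hone by blast
  obtain c where xc: "x = (\<lambda>b. c * d b)" using xy(1) I_def by blast
  have "d = hmult A d (hone A)" using mult_one_right[OF dv] by simp
  also have "\<dots> = hmult A d y"
    unfolding xy(3) hmult_add2 xc hmult_smult2 dint[OF dv] ed by simp
  finally have "d \<in> J" using li_mult[OF J(1) xy(2) dv] by simp
  moreover have "d \<in> I" unfolding I_def by (rule CollectI, rule exI[of _ 1]) simp
  ultimately have "d = (\<lambda>_. 0)" using J(2) by blast
  then show ?thesis by (auto simp: d_def fun_eq_iff)
qed

lemma normalized_integral_eq: assumes ss: "semisimple A" and L: "PI L"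
  shows "normalized_integral A = L"
  unfolding normalized_integral_def
proof (rule the_equality)
  show "hvec A L \<and> (\<forall>a. hvec A a \<longrightarrow> hmult A a L = (\<lambda>b. hcounit A a * L b)) \<and> hcounit A L = 1"
    using L unfolding PI_def .
next
  fix L' assume "hvec A L' \<and> (\<forall>a. hvec A a \<longrightarrow> hmult A a L' = (\<lambda>b. hcounit A a * L' b)) \<and> hcounit A L' = 1"
  then have "PI L'" unfolding PI_def .
  then show "L' = L" using integral_unique[OF ss _ L] by blast
qed

end

lemma hvecK_slice: "hvec (smash_coproduct A tau n) a \<Longrightarrow> z < n \<Longrightarrow> hvec A (\<lambda>i. a (i, z))"
  by (simp add: hvec_def basisK)

lemma hmultK_gen:
  assumes finB: "finite (basis A)" and a: "hvec (smash_coproduct A tau n) a" and z: "z < n"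
  shows "hmult (smash_coproduct A tau n) a v (l, z) = hmult A (\<lambda>i. a (i, z)) (\<lambda>j. v (j, z)) l"
proof -
  let ?K = "smash_coproduct A tau n"
  have fK: "finite (basis ?K)" using finB by (simp add: basisK)
  have "hmult ?K a v (l, z) = (\<Sum>w\<in>basis ?K. a w * hmult ?K (bvec ?K w) v (l, z))"
    by (rule hmult_lin1[OF fK a])
  also have "\<dots> = (\<Sum>i\<in>basis A. \<Sum>x\<in>{0..<n}. a (i, x) * (if x = z then hmult A (bvec A i) (\<lambda>j. v (j, z)) l else 0))"
    unfolding basisK sum.cartesian_product'
    by (intro sum.cong refl) (simp add: hmultK_bvec[OF finB _ z])
  also have "\<dots> = (\<Sum>i\<in>basis A. a (i, z) * hmult A (bvec A i) (\<lambda>j. v (j, z)) l)"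
  proof (intro sum.cong refl)
    fix i
    have "(\<Sum>x\<in>{0..<n}. a (i, x) * (if x = z then hmult A (bvec A i) (\<lambda>j. v (j, z)) l else 0))
        = (\<Sum>x\<in>{0..<n}. if x = z then a (i, z) * hmult A (bvec A i) (\<lambda>j. v (j, z)) l else 0)"
      by (rule sum.cong) auto
    then show "(\<Sum>x\<in>{0..<n}. a (i, x) * (if x = z then hmult A (bvec A i) (\<lambda>j. v (j, z)) l else 0))
        = a (i, z) * hmult A (bvec A i) (\<lambda>j. v (j, z)) l" using z by simp
  qed
  also have "\<dots> = hmult A (\<lambda>i. a (i, z)) (\<lambda>j. v (j, z)) l"
    by (rule hmult_lin1[OF finB hvecK_slice[OF a z], symmetric])
  finally show ?thesis .
qed

lemma hmultK_out: "\<not> z < n \<Longrightarrow> hmult (smash_coproduct A tau n) a v (l, z) = 0"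
  by (simp add: hmult_def basisK)

lemma hcounitK:
  assumes npos: "0 < n"
  shows "hcounit (smash_coproduct A tau n) a = hcounit A (\<lambda>i. a (i, 0))"
proof -
  have "hcounit (smash_coproduct A tau n) a = (\<Sum>i\<in>basis A. \<Sum>x\<in>{0..<n}. if x = 0 then a (i, 0) * eps A i else 0)"
    unfolding hcounit_def basisK sum.cartesian_product'
    by (intro sum.cong refl) (simp add: smash_coproduct_def)
  also have "\<dots> = hcounit A (\<lambda>i. a (i, 0))" using npos by (simp add: hcounit_def)
  finally show ?thesis .
qed

lemma integralK:
  fixes A :: "('b, 'k::field) hopf_sc"
  assumes hopf: "is_hopf_algebra A" and ss: "semisimple A" and npos: "0 < n"
  shows "normalized_integral (smash_coproduct A tau n) = emb (normalized_integral A) 0"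
proof -
  let ?K = "smash_coproduct A tau n"
  obtain L where L: "PI A L" using integral_exists[OF hopf ss] by blast
  have NA: "normalized_integral A = L" by (rule normalized_integral_eq[OF hopf ss L])
  have Lv: "hvec A L" and Li: "\<And>a. hvec A a \<Longrightarrow> hmult A a L = (\<lambda>b. hcounit A a * L b)" and Le: "hcounit A L = 1"
    using L unfolding PI_def[OF hopf] by auto
  have finB: "finite (basis A)" by (rule finB[OF hopf])
  define E where "E = emb L 0"
  have Ev: "hvec ?K E" using Lv npos by (auto simp: hvec_def basisK E_def emb_def)
  have Es: "(\<lambda>j. E (j, z)) = (if z = 0 then L else (\<lambda>_. 0))" for z by (auto simp: E_def emb_def)
  have hz: "hmult A a (\<lambda>_. 0) = (\<lambda>_. 0)" for a by (simp add: hmult_def fun_eq_iff)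
  have PE: "hvec ?K E \<and> (\<forall>a. hvec ?K a \<longrightarrow> hmult ?K a E = (\<lambda>b. hcounit ?K a * E b)) \<and> hcounit ?K E = 1"
  proof (intro conjI allI impI Ev)
    fix a assume a: "hvec ?K a"
    show "hmult ?K a E = (\<lambda>b. hcounit ?K a * E b)"
    proof
      fix b :: "'b \<times> nat"
      obtain l z where b: "b = (l, z)" by fastforce
      show "hmult ?K a E b = hcounit ?K a * E b"
      proof (cases "z < n")
        case True
        then show ?thesis unfolding b hmultK_gen[OF finB a True] Es hcounitK[OF npos]
          using Li[OF hvecK_slice[OF a npos]] hz by (auto simp: E_def emb_def)
      next
        case False
        then show ?thesis unfolding b hmultK_out[OF False] using npos by (simp add: E_def emb_def)
      qed
    qed
  next
    show "hcounit ?K E = 1" unfolding hcounitK[OF npos] Es using Le by simp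
  qed
  have uniq: "L' = E" if PL': "hvec ?K L' \<and> (\<forall>a. hvec ?K a \<longrightarrow> hmult ?K a L' = (\<lambda>b. hcounit ?K a * L' b)) \<and> hcounit ?K L' = 1" for L'
  proof -
    have L'v: "hvec ?K L'" and L'i: "\<And>a. hvec ?K a \<Longrightarrow> hmult ?K a L' = (\<lambda>b. hcounit ?K a * L' b)"
      and L'e: "hcounit ?K L' = 1" using PL' by auto
    define L0 where "L0 = (\<lambda>i. L' (i, 0))"
    have "PI A L0" unfolding PI_def[OF hopf]
    proof (intro conjI allI impI)
      show "hvec A L0" unfolding L0_def by (rule hvecK_slice[OF L'v npos])
      show "hcounit A L0 = 1" using L'e unfolding hcounitK[OF npos] L0_def .
    next
      fix a assume a: "hvec A a"
      have ea: "hvec ?K (emb a 0)" using a npos by (auto simp: hvec_def basisK emb_def)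
      show "hmult A a L0 = (\<lambda>b. hcounit A a * L0 b)"
      proof
        fix l
        have "hmult ?K (emb a 0) L' (l, 0) = hcounit ?K (emb a 0) * L' (l, 0)"
          using L'i[OF ea] by simp
        moreover have "(\<lambda>i. emb a 0 (i, 0)) = a" by (simp add: emb_def)
        ultimately show "hmult A a L0 l = hcounit A a * L0 l"
          unfolding hmultK_gen[OF finB ea npos] hcounitK[OF npos] L0_def by simp
      qed
    qed
    then have L0: "L0 = L" using integral_unique[OF hopf ss _ L] by blast
    show "L' = E"
    proof
      fix b :: "'b \<times> nat"
      obtain l z where b: "b = (l, z)" by fastforce
      show "L' b = E b"
      proof (cases "z < n")
        case False
        then show ?thesis using L'v npos unfolding b by (simp add: hvec_def basisK E_def emb_def)
      next
        case True
        show ?thesis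
        proof (cases "z = 0")
          case True
          then show ?thesis using L0 unfolding b L0_def by (auto simp: E_def emb_def)
        next
          case False
          define u where "u = (\<lambda>(i, x). if x = z then hone A i else (0::'k))"
          have uv: "hvec ?K u" using \<open>z < n\<close> by (auto simp: hvec_def basisK u_def hone_def)
          have u1: "(\<lambda>i. u (i, z)) = hone A" by (simp add: u_def)
          have u0: "(\<lambda>i. u (i, 0)) = (\<lambda>_. 0)" using False by (simp add: u_def)
          have "hmult ?K u L' (l, z) = hcounit ?K u * L' (l, z)" using L'i[OF uv] by simp
          then have "L' (l, z) = 0"
            unfolding hmultK_gen[OF finB uv \<open>z < n\<close>] hcounitK[OF npos] u1 u0
              mult_one_left[OF hopf hvecK_slice[OF L'v \<open>z < n\<close>]]
            by (simp add: hcounit_def)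
          then show ?thesis using False unfolding b by (simp add: E_def emb_def)
        qed
      qed
    qed
  qed
  have "normalized_integral ?K = E"
    unfolding normalized_integral_def by (rule the_equality, rule PE, rule uniq, assumption)
  then show ?thesis using NA E_def by simp
qed

lemma sum_LL_const:
  fixes c n :: nat
  assumes finB: "finite B" and c: "c < n"
  shows "(\<Sum>ws\<in>LL (B \<times> {0..<n}) m. if \<forall>w\<in>set ws. snd w = c then g ws else 0)
       = (\<Sum>js\<in>LL B m. g (map (\<lambda>j. (j, c)) js))"
proof (induction m arbitrary: g)
  case 0 then show ?case by (simp add: LL_0')
next
  case (Suc m)
  have fK: "finite (B \<times> {0..<n})" by (rule finite_cartesian_product[OF finB]) simp
  have "(\<Sum>ws\<in>LL (B \<times> {0..<n}) (Suc m). if \<forall>w\<in>set ws. snd w = c then g ws else 0)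
      = (\<Sum>i\<in>B. \<Sum>x\<in>{0..<n}. \<Sum>ws\<in>LL (B \<times> {0..<n}) m. if x = c \<and> (\<forall>w\<in>set ws. snd w = c) then g ((i, x) # ws) else 0)"
    unfolding sum_LL_Suc[OF fK] sum.cartesian_product' by simp
  also have "\<dots> = (\<Sum>i\<in>B. \<Sum>ws\<in>LL (B \<times> {0..<n}) m. if \<forall>w\<in>set ws. snd w = c then g ((i, c) # ws) else 0)"
  proof (intro sum.cong refl)
    fix i
    have "(\<Sum>x\<in>{0..<n}. \<Sum>ws\<in>LL (B \<times> {0..<n}) m. if x = c \<and> (\<forall>w\<in>set ws. snd w = c) then g ((i, x) # ws) else 0)
        = (\<Sum>x\<in>{0..<n}. if x = c then (\<Sum>ws\<in>LL (B \<times> {0..<n}) m. if \<forall>w\<in>set ws. snd w = c then g ((i, c) # ws) else 0) else 0)"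
      by (intro sum.cong refl) auto
    then show "(\<Sum>x\<in>{0..<n}. \<Sum>ws\<in>LL (B \<times> {0..<n}) m. if x = c \<and> (\<forall>w\<in>set ws. snd w = c) then g ((i, x) # ws) else 0)
        = (\<Sum>ws\<in>LL (B \<times> {0..<n}) m. if \<forall>w\<in>set ws. snd w = c then g ((i, c) # ws) else 0)"
      using c by simp
  qed
  also have "\<dots> = (\<Sum>i\<in>B. \<Sum>js\<in>LL B m. g ((i, c) # map (\<lambda>j. (j, c)) js))"
    using Suc[of "\<lambda>ws. g ((_, c) # ws)"] by (intro sum.cong refl) (rule Suc)
  also have "\<dots> = (\<Sum>js\<in>LL B (Suc m). g (map (\<lambda>j. (j, c)) js))"
    by (simp add: sum_LL_Suc[OF finB])
  finally show ?case .
qed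

lemma PP_QQ:
  assumes npos: "0 < n"
  shows "PP A tau n c ks (map (\<lambda>j. (j, n - 1)) js) = QQ A tau n c ks js"
proof (induction ks arbitrary: js c)
  case Nil then show ?case by (cases js) auto
next
  case (Cons k ks)
  show ?case
  proof (cases js)
    case (Cons j js')
    have "(c - int (n - 1)) mod int n = (c + 1) mod int n"
    proof -
      have "c - int (n - 1) = (c + 1) + (-1) * int n" using npos by simp
      then show ?thesis by (metis mod_mult_self1)
    qed
    then have e: "PP A tau n (c - int (n - 1)) ks (map (\<lambda>j. (j, n - 1)) js') = PP A tau n (c + 1) ks (map (\<lambda>j. (j, n - 1)) js')"
      by (rule PP_cong)
    have "PP A tau n c (k # ks) (map (\<lambda>j. (j, n - 1)) js) = TT A tau n c k j * PP A tau n (c - int (n - 1)) ks (map (\<lambda>j. (j, n - 1)) js')"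
      using Cons by simp
    also have "\<dots> = TT A tau n c k j * QQ A tau n (c + 1) ks js'" unfolding e Cons.IH[of "c + 1" js'] ..
    finally show ?thesis using Cons by simp
  qed simp
qed

lemma sum_list_const: "sum_list (map (\<lambda>_. c) js) = length js * (c::nat)"
  by (induction js) auto

lemma charA: "character A r rho a = (\<Sum>p<r. \<Sum>i\<in>basis A. a i * rho i $$ (p, p))"
  by (simp add: character_def hact_def)

lemma charK:
  assumes npos: "0 < n"
  shows "character (smash_coproduct A tau n) r (induced_rep n r rho) a
    = (\<Sum>p<r. \<Sum>i\<in>basis A. a (i, n - 1) * rho i $$ (p, p))"
proof -
  have "(\<Sum>w\<in>basis A \<times> {0..<n}. a w * induced_rep n r rho w $$ (p, p)) = (\<Sum>i\<in>basis A. a (i, n - 1) * rho i $$ (p, p))"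
    if p: "p < r" for p
    unfolding sum.cartesian_product'
  proof (intro sum.cong refl)
    fix i
    have "(\<Sum>x\<in>{0..<n}. a (i, x) * induced_rep n r rho (i, x) $$ (p, p))
      = (\<Sum>x\<in>{0..<n}. if x = n - 1 then a (i, n - 1) * rho i $$ (p, p) else 0)"
      using npos p by (intro sum.cong refl) (auto simp: induced_rep_def)
    then show "(\<Sum>x\<in>{0..<n}. a (i, x) * induced_rep n r rho (i, x) $$ (p, p)) = a (i, n - 1) * rho i $$ (p, p)"
      using npos by simp
  qed
  then show ?thesis by (simp add: character_def hact_def basisK)
qed

theorem theorem4p2:
  fixes A :: "('b, 'k::field_char_0) hopf_sc"
    and tau :: "'b \<Rightarrow> 'b \<Rightarrow> 'k"
    and n m r :: nat
    and rhoN :: "'b \<Rightarrow> 'k mat"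
  assumes alg_closed: "\<And>p::'k poly. degree p > 0 \<Longrightarrow> \<exists>x. poly p x = 0"
    and hopf: "is_hopf_algebra A"
    and ss: "semisimple A"
    and aut: "hopf_automorphism A tau"
    and ord: "has_order A tau n"
    and N: "is_module A r rhoN"
    and m: "0 < m" "n dvd m"
  shows "twisted_indicator A tau m r rhoN =
         indicator (smash_coproduct A tau n) m r (induced_rep n r rhoN)"
proof -
  let ?K = "smash_coproduct A tau n"
  let ?L = "normalized_integral A"
  have npos: "0 < n" and per: "\<forall>v. hvec A v \<longrightarrow> (hlin A tau ^^ n) v = v"
    using ord unfolding has_order_def by auto
  have finB: "finite (basis A)" by (rule finB[OF hopf])
  have fK: "finite (basis ?K)" using finB by (simp add: basisK)
  have NK: "normalized_integral ?K = emb ?L 0" by (rule integralK[OF hopf ss npos])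
  have mod0: "(m * (n - 1)) mod n = 0" using m(2) by (auto elim!: dvdE)
  define c where "c = n - 1"
  have cn: "c < n" using npos by (simp add: c_def)
  have pK: "pprod ?K ws (l, c) = (if \<forall>w\<in>set ws. snd w = c then pprod A (map fst ws) l else 0)"
    if "set ws \<subseteq> basis A \<times> {0..<n}" for ws l
    by (rule pprodK[OF finB cn that])
  have key: "hopf_power ?K id m (emb ?L 0) (l, c) = hopf_power A (hlin A tau) m ?L l" for l
  proof -
    have "hopf_power ?K id m (emb ?L 0) (l, c)
        = (\<Sum>ws\<in>LL (basis A \<times> {0..<n}) m. if \<forall>w\<in>set ws. snd w = c then
             icoef ?K (emb ?L 0) ws * pprod A (map fst ws) l else 0)"
      unfolding hopf_power_def tp_id basisK
      by (intro sum.cong refl) (simp add: pK)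
    also have "\<dots> = (\<Sum>js\<in>LL (basis A) m. icoef ?K (emb ?L 0) (map (\<lambda>j. (j, c)) js) * pprod A js l)"
      by (subst sum_LL_const[OF finB cn]) (simp add: o_def)
    also have "\<dots> = (\<Sum>js\<in>LL (basis A) m. (\<Sum>ks\<in>LL (basis A) m. icoef A ?L ks * QQ A tau n 0 ks js) * pprod A js l)"
    proof (intro sum.cong refl)
      fix js assume js: "js \<in> LL (basis A) m"
      have ne: "map (\<lambda>j. (j, c)) js \<noteq> []" using js m(1) by auto
      have st: "set (map (\<lambda>j. (j, c)) js) \<subseteq> basis ?K" using js cn by (auto simp: basisK)
      have sl: "sum_list (map snd (map (\<lambda>j. (j, c)) js)) mod n = 0"
        using js mod0 by (simp add: o_def sum_list_const c_def)
      have "PP A tau n 0 ks (map (\<lambda>j. (j, c)) js) = QQ A tau n 0 ks js" for ks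
        unfolding c_def by (rule PP_QQ[OF npos])
      then show "icoef ?K (emb ?L 0) (map (\<lambda>j. (j, c)) js) * pprod A js l
          = (\<Sum>ks\<in>LL (basis A) m. icoef A ?L ks * QQ A tau n 0 ks js) * pprod A js l"
        using icoefK[OF finB npos npos refl refl st ne] js sl by simp
    qed
    also have "\<dots> = (\<Sum>ks\<in>LL (basis A) m. icoef A ?L ks * (\<Sum>js\<in>LL (basis A) m. QQ A tau n 0 ks js * pprod A js l))"
      by (simp add: sum_distrib_left sum_distrib_right mult_ac) (rule sum.swap)
    also have "\<dots> = (\<Sum>ks\<in>LL (basis A) m. icoef A ?L ks * twisted_prod A (hlin A tau) 0 ks l)"
      by (intro sum.cong refl) (simp add: tp_expand[OF finB per])
    also have "\<dots> = hopf_power A (hlin A tau) m ?L l" by (simp add: hopf_power_def)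
    finally show ?thesis .
  qed
  have "indicator ?K m r (induced_rep n r rhoN) = (\<Sum>p<r. \<Sum>i\<in>basis A. hopf_power ?K id m (emb ?L 0) (i, c) * rhoN i $$ (p, p))"
    unfolding indicator_def NK charK[OF npos] c_def ..
  then show ?thesis unfolding twisted_indicator_def charA key by simp
qed

end
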